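(* Let $\hbar,\alpha,g_0,\kappa_0,b_0>0$ and $\lambda>2b_0$, and let $\Delta\tau=\Delta\tau_O=\frac{4\lambda\kappa_0}{\alpha g_0(\lambda-2b_0)}$, $K=\frac{2\lambda\kappa_0}{\alpha g_0\Delta\tau}$, $C=\frac{\alpha g_0\Delta\tau}{2\lambda\kappa_0}$. Define the pointer states by their position kernels $$\rho_\pm(b,b')=\frac{C}{b_0\pi}\,\frac{\sin[K(b-b')]}{b-b'}\,\frac{\sin(b_0b)}{b}\,\frac{\sin(b_0b')}{b'}\,e^{\pm\frac{i\lambda}{2}(b-b')},$$ and their momentum densities $\langle s|\rho_\pm|s\rangle=\frac{1}{2\pi\hbar}\int\!\!\int e^{-is(b-b')/\hbar}\rho_\pm(b,b')\,db\,db'$. Then $\langle s|\rho_-|s\rangle=\langle -s|\rho_+|-s\rangle$, and $\langle s|\rho_+|s\rangle$ vanishes outside $[0,\lambda\hbar]$ and is given on $[0,\lambda\hbar]$ as follows: (i) if $\lambda>4b_0$: $\frac{s}{2b_0\hbar^2(\lambda-2b_0)}$ on $[0,2b_0\hbar]$, $\frac{1}{(\lambda-2b_0)\hbar}$ on $[2b_0\hbar,(\lambda-2b_0)\hbar]$, $\frac{\lambda-s/\hbar}{2b_0\hbar(\lambda-2b_0)}$ on $[(\lambda-2b_0)\hbar,\lambda\hbar]$; (ii) if $2b_0<\lambda<4b_0$: $\frac{s}{2b_0\hbar^2(\lambda-2b_0)}$ on $[0,(\lambda-2b_0)\hbar]$, $\frac{1}{2b_0\hbar}$ on $[(\lambda-2b_0)\hbar,2b_0\hbar]$,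 $\frac{\lambda-s/\hbar}{2b_0\hbar(\lambda-2b_0)}$ on $[2b_0\hbar,\lambda\hbar]$; (iii) if $\lambda=4b_0$: $\frac{4s}{\lambda^2\hbar^2}$ on $[0,\lambda\hbar/2]$ and $\frac{4(\lambda-s/\hbar)}{\lambda^2\hbar}$ on $[\lambda\hbar/2,\lambda\hbar]$. In particular the momentum densities of $\rho_+$ and $\rho_-$ have supports $[0,\lambda\hbar]$ and $[-\lambda\hbar,0]$, which do not overlap except at $s=0$.
   Context: $\rho_\pm$ are the pointer states in the measurement of $S_z$ of a spin-1/2 particle with probe initial state $\frac{1}{\sqrt{\kappa_0\pi}}\frac{\sin(\kappa_0 q)}{q}$ and pointer initial state $\frac{1}{\sqrt{b_0\pi}}\frac{\sin(b_0 b)}{b}$; $s$ is the pointer momentum variable, with $\langle s|b\rangle=e^{isb/\hbar}/\sqrt{2\pi\hbar}$. *)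

theory Defs
  imports "HOL-Analysis.Analysis"
begin

definition dtauO :: "real \<Rightarrow> real \<Rightarrow> real \<Rightarrow> real \<Rightarrow> real \<Rightarrow> real" where
  "dtauO alpha g0 kappa0 b0 lam = 4 * lam * kappa0 / (alpha * g0 * (lam - 2 * b0))"

definition Kpar :: "real \<Rightarrow> real \<Rightarrow> real \<Rightarrow> real \<Rightarrow> real \<Rightarrow> real" where
  "Kpar alpha g0 kappa0 b0 lam = 2 * lam * kappa0 / (alpha * g0 * dtauO alpha g0 kappa0 b0 lam)"

definition Cpar :: "real \<Rightarrow> real \<Rightarrow> real \<Rightarrow> real \<Rightarrow> real \<Rightarrow> real" where
  "Cpar alpha g0 kappa0 b0 lam = alpha * g0 * dtauO alpha g0 kappa0 b0 lam / (2 * lam * kappa0)"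

text \<open>Position kernels of the pointer states rho_+ (sg = 1) and rho_- (sg = -1).
  The removable singularities at b = 0, b' = 0, b = b' form a null set.\<close>

definition rho_kernel :: "real \<Rightarrow> real \<Rightarrow> real \<Rightarrow> real \<Rightarrow> real \<Rightarrow> real \<Rightarrow> real \<Rightarrow> real \<Rightarrow> complex" where
  "rho_kernel sg alpha g0 kappa0 b0 lam b b' =
     complex_of_real
       (Cpar alpha g0 kappa0 b0 lam / (b0 * pi)
        * (sin (Kpar alpha g0 kappa0 b0 lam * (b - b')) / (b - b'))
        * (sin (b0 * b) / b) * (sin (b0 * b') / b'))
     * exp (complex_of_real sg * \<i> * complex_of_real (lam / 2 * (b - b')))"

definition rho_plus :: "real \<Rightarrow> real \<Rightarrow> real \<Rightarrow> real \<Rightarrow> real \<Rightarrow> real \<Rightarrow> real \<Rightarrow> complex" where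
  "rho_plus = rho_kernel 1"

definition rho_minus :: "real \<Rightarrow> real \<Rightarrow> real \<Rightarrow> real \<Rightarrow> real \<Rightarrow> real \<Rightarrow> real \<Rightarrow> complex" where
  "rho_minus = rho_kernel (-1)"

definition mom_density :: "real \<Rightarrow> (real \<Rightarrow> real \<Rightarrow> complex) \<Rightarrow> real \<Rightarrow> complex" where
  "mom_density hbar rho s =
     complex_of_real (1 / (2 * pi * hbar)) *
     (LINT b|lborel. LINT b'|lborel.
        exp (- \<i> * complex_of_real (s * (b - b') / hbar)) * rho b b')"

end

theory Submission
  imports Defs "HOL-Probability.Sinc_Integral" "HOL-Real_Asymp.Real_Asymp"
begin

lemma one_minus_cos_div_eq:
  fixes w x :: real
  shows "(1 - cos (w * x)) / x = w * (sin (w*x/2) * sinc (w*x/2))"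
proof (cases "x = 0 \<or> w = 0")
  case True then show ?thesis by auto
next
  case False
  have "cos (w*x) = cos (2 * (w*x/2))" by simp
  also have "\<dots> = 1 - 2 * (sin (w*x/2))^2" by (rule cos_double_sin)
  finally show ?thesis using False by (simp add: field_simps power2_eq_square)
qed

lemma Si_0: "Si 0 = 0"
  unfolding Si_def by (metis interval_integral_endpoints_same zero_ereal_def)

lemma Q_half:
  fixes w :: real assumes w: "w > 0"
  shows "set_integrable lborel (einterval 0 \<infinity>) (\<lambda>x. (1 - cos (w*x)) / x^2)"
    and "(LBINT x=0..\<infinity>. (1 - cos (w*x)) / x^2) = w * pi / 2"
proof -
  define F where "F x = w * Si (w*x) - (1 - cos (w*x)) / x" for x
  have D: "DERIV F x :> (1 - cos (w*x)) / x^2" if "0 < x" for x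
  proof -
    have "DERIV F x :> w * (sinc (w*x) * w) - ((w * sin (w*x)) * x - (1 - cos (w*x)) * 1) / x^2"
      unfolding F_def using that
      apply (auto intro!: derivative_eq_intros DERIV_chain2[OF DERIV_Si] simp: power2_eq_square)
      by (simp add: ac_simps)
    moreover have "w * (sinc (w*x) * w) - ((w * sin (w*x)) * x - (1 - cos (w*x)) * 1) / x^2
        = (1 - cos (w*x)) / x^2" using that w by (simp add: field_simps power2_eq_square)
    ultimately show ?thesis by simp
  qed
  have C: "isCont (\<lambda>x. (1 - cos (w*x)) / x^2) x" if "0 < x" for x
    using that by (auto intro!: continuous_intros)
  have N: "AE x in lborel. 0 < ereal x \<longrightarrow> ereal x < \<infinity> \<longrightarrow> 0 \<le> (1 - cos (w*x)) / x^2"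
    by (auto simp: cos_le_one)
  have A: "((F \<circ> real_of_ereal) \<longlongrightarrow> 0) (at_right (ereal 0))"
  proof -
    have e: "F x = w * Si (w*x) - w * (sin (w*x/2) * sinc (w*x/2))" for x
      unfolding F_def one_minus_cos_div_eq ..
    have c1: "isCont (\<lambda>x. Si (w*x)) 0" by (rule isCont_o2[OF _ isCont_Si]) auto
    have c2: "isCont (\<lambda>x. sinc (w*x/2)) 0" by (rule isCont_o2[OF _ isCont_sinc]) auto
    have "isCont (\<lambda>x. w * Si (w*x) - w * (sin (w*x/2) * sinc (w*x/2))) 0"
      using c1 c2 by (intro continuous_intros) auto
    then have "((\<lambda>x. w * Si (w*x) - w * (sin (w*x/2) * sinc (w*x/2))) \<longlongrightarrow>
           w * Si (w*0) - w * (sin (w*0/2) * sinc (w*0/2))) (at_right 0)"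
      unfolding isCont_def by (rule tendsto_mono[OF at_within_le_at])
    then show ?thesis unfolding ereal_tendsto_simps e by (simp add: Si_0)
  qed
  have B: "((F \<circ> real_of_ereal) \<longlongrightarrow> w * pi / 2) (at_left \<infinity>)"
  proof -
    have 1: "((\<lambda>x. w * Si (w*x)) \<longlongrightarrow> w * (pi/2)) at_top"
      by (intro tendsto_mult tendsto_const filterlim_compose[OF Si_at_top])
         (simp add: filterlim_tendsto_pos_mult_at_top[OF tendsto_const w filterlim_ident])
    have 2: "((\<lambda>x. (1 - cos (w*x)) / x) \<longlongrightarrow> 0) at_top"
    proof (rule tendsto_sandwich[where f="\<lambda>x. 0" and h="\<lambda>x. 2 / x"])
      show "\<forall>\<^sub>F x in at_top. 0 \<le> (1 - cos (w*x)) / x"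
        using eventually_gt_at_top[of 0] by eventually_elim (auto simp: cos_le_one)
      show "\<forall>\<^sub>F x in at_top. (1 - cos (w*x)) / x \<le> 2 / x"
        using eventually_gt_at_top[of 0] by eventually_elim
          (use cos_ge_minus_one in \<open>auto intro!: divide_right_mono\<close>)
      show "((\<lambda>x::real. 2 / x) \<longlongrightarrow> 0) at_top"
        by (intro tendsto_divide_0[OF tendsto_const] filterlim_at_top_imp_at_infinity filterlim_ident)
    qed simp
    show ?thesis unfolding ereal_tendsto_simps F_def using tendsto_diff[OF 1 2] by simp
  qed
  note R = interval_integral_FTC_nonneg[of 0 \<infinity> F "\<lambda>x. (1 - cos (w*x)) / x^2" 0 "w * pi / 2"]
  show "set_integrable lborel (einterval 0 \<infinity>) (\<lambda>x. (1 - cos (w*x)) / x^2)"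
    "(LBINT x=0..\<infinity>. (1 - cos (w*x)) / x^2) = w * pi / 2"
    using R D C N A B by (auto simp: zero_ereal_def)
qed

lemma einterval_0_inf: "einterval 0 \<infinity> = {0<..}"
  by (auto simp: einterval_def zero_ereal_def)

lemma even_integral:
  fixes f :: "real \<Rightarrow> real"
  assumes ev: "\<And>x. f (-x) = f x" and f0: "f 0 = 0"
    and int: "set_integrable lborel {0<..} f"
  shows "integrable lborel f" "integral\<^sup>L lborel f = 2 * (LINT x:{0<..}|lborel. f x)"
proof -
  define g where "g x = indicator {0<..} x * f x" for x
  have ig: "integrable lborel g" using int unfolding set_integrable_def g_def by simp
  have ig2: "integrable lborel (\<lambda>x. g (-x))"
    using lborel_integrable_real_affine[OF ig, of "-1" 0] by simp
  have e: "f x = g x + g (-x)" for x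
    unfolding g_def using ev[of x] f0 by (cases "x > 0"; cases "x < 0") (auto simp: indicator_def)
  have i2: "integral\<^sup>L lborel (\<lambda>x. g (-x)) = integral\<^sup>L lborel g"
    using lborel_integral_real_affine[of "-1" g 0] by simp
  show "integrable lborel f" unfolding e[abs_def] using ig ig2 by simp
  have "integral\<^sup>L lborel f = integral\<^sup>L lborel g + integral\<^sup>L lborel (\<lambda>x. g (-x))"
    unfolding e[abs_def] using ig ig2 by simp
  also have "\<dots> = 2 * (LINT x:{0<..}|lborel. f x)"
    using i2 unfolding g_def set_lebesgue_integral_def by simp
  finally show "integral\<^sup>L lborel f = 2 * (LINT x:{0<..}|lborel. f x)" .
qed

lemma Q_full:
  fixes w :: real
  shows "integrable lborel (\<lambda>x. (1 - cos (w*x)) / x^2)"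
    "(LBINT x. (1 - cos (w*x)) / x^2) = pi * \<bar>w\<bar>"
proof -
  have gen: "integrable lborel (\<lambda>x. (1 - cos (u*x)) / x^2) \<and>
      (LBINT x. (1 - cos (u*x)) / x^2) = pi * u" if "u > 0" for u
  proof -
    note h = Q_half[OF that]
    have si: "set_integrable lborel {0<..} (\<lambda>x. (1 - cos (u*x)) / x^2)"
      using h(1) by (simp add: einterval_0_inf)
    have vv: "(LINT x:{0<..}|lborel. (1 - cos (u*x)) / x^2) = u * pi / 2"
      using h(2) by (simp add: interval_lebesgue_integral_def einterval_0_inf)
    show ?thesis using even_integral[of "\<lambda>x. (1 - cos (u*x)) / x^2", OF _ _ si] vv by simp
  qed
  have "integrable lborel (\<lambda>x. (1 - cos (w*x)) / x^2) \<and>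
      (LBINT x. (1 - cos (w*x)) / x^2) = pi * \<bar>w\<bar>"
  proof (cases "w = 0")
    case True then show ?thesis by simp
  next
    case False
    have "cos (w*x) = cos (\<bar>w\<bar>*x)" for x
      using cos_minus[of "w*x"] by (cases "w \<ge> 0") auto
    then show ?thesis using gen[of "\<bar>w\<bar>"] False by simp
  qed
  then show "integrable lborel (\<lambda>x. (1 - cos (w*x)) / x^2)"
    "(LBINT x. (1 - cos (w*x)) / x^2) = pi * \<bar>w\<bar>" by auto
qed

lemma S_lemma:
  fixes a c :: real
  shows "integrable lborel (\<lambda>x. sin (a*x) * sin (c*x) / x^2)"
    "(LBINT x. sin (a*x) * sin (c*x) / x^2) = pi / 2 * (\<bar>a + c\<bar> - \<bar>a - c\<bar>)"
proof -
  have e: "sin (a*x) * sin (c*x) / x^2 = ((1 - cos ((a+c)*x)) / x^2 - (1 - cos ((a-c)*x)) / x^2) / 2" for x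
    by (simp add: cos_diff cos_add algebra_simps diff_divide_distrib[symmetric] add_divide_distrib[symmetric])
  show "integrable lborel (\<lambda>x. sin (a*x) * sin (c*x) / x^2)"
    unfolding e using Q_full(1)[of "a+c"] Q_full(1)[of "a-c"] by simp
  show "(LBINT x. sin (a*x) * sin (c*x) / x^2) = pi / 2 * (\<bar>a + c\<bar> - \<bar>a - c\<bar>)"
    unfolding e using Q_full[of "a+c"] Q_full[of "a-c"] by (simp add: algebra_simps) (simp add: field_simps)
qed

lemma odd_integral_zero:
  fixes f :: "real \<Rightarrow> 'b::{banach, second_countable_topology}"
  assumes "\<And>x. f (-x) = - f x"
  shows "integral\<^sup>L lborel f = 0"
proof -
  have "integral\<^sup>L lborel f = integral\<^sup>L lborel (\<lambda>x. f (-x))"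
    using lborel_integral_real_affine[of "-1" f 0] by simp
  also have "\<dots> = - integral\<^sup>L lborel f" by (simp add: assms)
  finally have "integral\<^sup>L lborel f + integral\<^sup>L lborel f = 0"
    using eq_neg_iff_add_eq_0 by blast
  then have "2 *\<^sub>R integral\<^sup>L lborel f = 0" by (simp add: scaleR_2)
  then show ?thesis by simp
qed

lemma int_ind:
  fixes f :: "real \<Rightarrow> 'b::{banach, second_countable_topology}"
  assumes "f \<in> borel_measurable lborel" "\<And>x. norm (f x) \<le> B"
  shows "integrable lborel (\<lambda>x. indicator {a<..<b} x *\<^sub>R f x)"
proof (rule Bochner_Integration.integrable_bound)
  have "emeasure lborel {a<..<b} < \<infinity>" by (cases "a \<le> b") auto
  then show "integrable lborel (\<lambda>x. B * indicator {a<..<b} x)" by simp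
  show "(\<lambda>x. indicator {a<..<b} x *\<^sub>R f x) \<in> borel_measurable lborel" using assms(1) by measurable
  show "AE x in lborel. norm (indicator {a<..<b} x *\<^sub>R f x) \<le> norm (B * indicator {a<..<b} x :: real)"
    using assms(2) by (auto simp: indicator_def intro!: AE_I2) (metis norm_ge_zero order.trans abs_of_nonneg)
qed

lemma shift_lim:
  fixes f :: "real \<Rightarrow> real" and d B :: real
  assumes fm: "f \<in> borel_measurable lborel" and fB: "\<And>x. \<bar>f x\<bar> \<le> B"
    and fx: "\<And>x. x \<noteq> 0 \<Longrightarrow> \<bar>f x\<bar> \<le> B / \<bar>x\<bar>"
  shows "((\<lambda>R. (LBINT x. indicator {d-R<..<d+R} x * f x) - (LBINT x. indicator {-R<..<R} x * f x)) \<longlongrightarrow> 0) at_top"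
proof (rule Lim_null_comparison)
  define e where "e = \<bar>d\<bar>"
  have B0: "B \<ge> 0" using fB[of 0] by simp
  show "((\<lambda>R. 4 * e * B / (R - e)) \<longlongrightarrow> 0) at_top" by real_asymp
  show "\<forall>\<^sub>F R in at_top. norm ((LBINT x. indicator {d-R<..<d+R} x * f x) - (LBINT x. indicator {-R<..<R} x * f x)) \<le> 4 * e * B / (R - e)"
    using eventually_gt_at_top[of "2*e+1"]
  proof eventually_elim
    case (elim R)
    have Re: "R - e > 0" using elim e_def by auto
    have e0: "e \<ge> 0" unfolding e_def by simp
    have i1: "integrable lborel (\<lambda>x. indicator {d-R<..<d+R} x * f x)"
      using int_ind[OF fm, of B "d-R" "d+R"] fB by simp
    have i2: "integrable lborel (\<lambda>x. indicator {-R<..<R} x * f x)"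
      using int_ind[OF fm, of B "-R" "R"] fB by simp
    define bnd where "bnd x = B / (R - e) * (indicator {R-e..R+e} x + indicator {-R-e..-R+e} x)" for x
    have ib: "integrable lborel bnd" unfolding bnd_def using e0
      by (intro integrable_mult_right Bochner_Integration.integrable_add integrable_real_indicator) auto
    have pb: "norm (indicator {d-R<..<d+R} x * f x - indicator {-R<..<R} x * f x) \<le> bnd x" for x
    proof (cases "indicator {d-R<..<d+R} x = (indicator {-R<..<R} x :: real)")
      case True then show ?thesis using B0 Re by (simp add: bnd_def)
    next
      case False
      then have "(d - R < x \<and> x < d + R) \<noteq> (-R < x \<and> x < R)"
        by (auto simp: indicator_def)
      then have x1: "(R - e \<le> x \<and> x \<le> R + e) \<or> (-R-e \<le> x \<and> x \<le> -R+e)"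
        unfolding e_def by (cases "d \<ge> 0"; auto)
      then have xa: "\<bar>x\<bar> \<ge> R - e" "x \<noteq> 0" using Re by auto
      have "\<bar>f x\<bar> \<le> B / \<bar>x\<bar>" using fx xa by simp
      also have "\<dots> \<le> B / (R - e)" using xa Re B0 by (intro divide_left_mono) auto
      finally have fb: "\<bar>f x\<bar> \<le> B / (R - e)" .
      have "norm (indicator {d-R<..<d+R} x * f x - indicator {-R<..<R} x * f x) \<le> \<bar>f x\<bar>"
        by (auto simp: indicator_def)
      also have "\<dots> \<le> bnd x"
        using x1 fb B0 Re unfolding bnd_def by (auto simp: indicator_def)
      finally show ?thesis .
    qed
    have "norm ((LBINT x. indicator {d-R<..<d+R} x * f x) - (LBINT x. indicator {-R<..<R} x * f x))
        = norm (LBINT x. indicator {d-R<..<d+R} x * f x - indicator {-R<..<R} x * f x)"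
      using i1 i2 by simp
    also have "\<dots> \<le> integral\<^sup>L lborel bnd"
      by (rule Bochner_Integration.integral_norm_bound_integral) (use i1 i2 ib pb in auto)
    also have "integral\<^sup>L lborel bnd = B / (R - e) * (2 * e + 2 * e)"
      unfolding bnd_def using Re e0
      by (subst integral_mult_right_zero, subst Bochner_Integration.integral_add) (auto simp: measure_def)
    also have "\<dots> = 4 * e * B / (R - e)" by simp
    finally show ?case .
  qed
qed

definition chi :: "real \<Rightarrow> real \<Rightarrow> real" where
  "chi c w = (sgn (c + w) + sgn (c - w)) / 2"

lemma sin_div_bounds:
  fixes a x :: real
  shows "\<bar>sin (a*x) / x\<bar> \<le> max \<bar>a\<bar> 1" and "x \<noteq> 0 \<Longrightarrow> \<bar>sin (a*x) / x\<bar> \<le> max \<bar>a\<bar> 1 / \<bar>x\<bar>"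
proof -
  show "\<bar>sin (a*x) / x\<bar> \<le> max \<bar>a\<bar> 1"
  proof (cases "x = 0")
    case False
    have "\<bar>sin (a*x)\<bar> \<le> \<bar>a\<bar> * \<bar>x\<bar>" using abs_sin_x_le_abs_x[of "a*x"] by (simp add: abs_mult)
    then have "\<bar>sin (a*x) / x\<bar> \<le> \<bar>a\<bar>" using False by (simp add: abs_divide divide_le_eq)
    then show ?thesis by simp
  qed simp
  assume "x \<noteq> 0"
  then show "\<bar>sin (a*x) / x\<bar> \<le> max \<bar>a\<bar> 1 / \<bar>x\<bar>"
    by (simp add: abs_divide divide_right_mono le_max_iff_disj)
qed

lemma sym_sin:
  fixes a R :: real assumes R: "R > 0"
  shows "(LBINT x. indicator {-R<..<R} x * (sin (a*x) / x)) = 2 * (sgn a * Si (R * \<bar>a\<bar>))"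
proof -
  define f where "f x = indicator {-R<..<R} x * (sin (a*x) / x)" for x
  have ev: "f (-x) = f x" for x unfolding f_def by (auto simp: indicator_def)
  have f0: "f 0 = 0" unfolding f_def by simp
  have e2: "indicator {0<..} x *\<^sub>R f x = indicator {0<..<R} x *\<^sub>R (sin (x*a) / x)" for x
    unfolding f_def using R by (auto simp: indicator_def mult.commute)
  have si: "set_integrable lborel {0<..} f"
    unfolding set_integrable_def e2
    by (rule int_ind[where B="max \<bar>a\<bar> 1"]) (use sin_div_bounds(1)[of a] in \<open>auto simp: mult.commute\<close>)
  have "(LBINT x. f x) = 2 * (LINT x:{0<..}|lborel. f x)" using even_integral(2)[OF ev f0 si] .
  also have "(LINT x:{0<..}|lborel. f x) = (LBINT t=0..R. sin (t * a) / t)"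
    unfolding set_lebesgue_integral_def e2 interval_lebesgue_integral_def using R
    by (simp add: einterval_eq zero_ereal_def set_lebesgue_integral_def)
  also have "\<dots> = sgn a * Si (R * \<bar>a\<bar>)" using LBINT_I0c_sin_scale_divide[of R a] R by simp
  finally show ?thesis unfolding f_def .
qed

lemma M0:
  fixes a d :: real
  shows "((\<lambda>R. LBINT x. indicator {d-R<..<d+R} x * (sin (a*x) / x)) \<longlongrightarrow> pi * sgn a) at_top"
proof -
  have fm: "(\<lambda>x. sin (a*x) / x) \<in> borel_measurable lborel" by measurable
  note sh = shift_lim[OF fm sin_div_bounds(1) sin_div_bounds(2), of d]
  have lim2: "((\<lambda>R. 2 * (sgn a * Si (R * \<bar>a\<bar>))) \<longlongrightarrow> pi * sgn a) at_top"
  proof (cases "a = 0")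
    case True then show ?thesis by simp
  next
    case False
    have "filterlim (\<lambda>R. R * \<bar>a\<bar>) at_top at_top"
      using False by (intro filterlim_at_top_mult_tendsto_pos[OF tendsto_const]) (auto intro: filterlim_ident)
    from filterlim_compose[OF Si_at_top this]
    have "((\<lambda>R. 2 * (sgn a * Si (R * \<bar>a\<bar>))) \<longlongrightarrow> 2 * (sgn a * (pi/2))) at_top"
      by (intro tendsto_intros)
    then show ?thesis by (simp add: algebra_simps)
  qed
  have lim3: "((\<lambda>R. LBINT x. indicator {-R<..<R} x * (sin (a*x) / x)) \<longlongrightarrow> pi * sgn a) at_top"
  proof -
    have "\<forall>\<^sub>F R in at_top. 2 * (sgn a * Si (R * \<bar>a\<bar>)) = (LBINT x. indicator {-R<..<R} x * (sin (a*x) / x))"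
      using eventually_gt_at_top[of 0] by eventually_elim (subst sym_sin, auto)
    from Lim_transform_eventually[OF lim2 this] show ?thesis .
  qed
  from tendsto_add[OF sh lim3] show ?thesis by simp
qed

lemma M2:
  fixes w c d :: real
  shows "((\<lambda>R. LBINT x. indicator {d-R<..<d+R} x * (sin (w*x) * sin (c*x) / x)) \<longlongrightarrow> 0) at_top"
proof -
  have fm: "(\<lambda>x. sin (w*x) * sin (c*x) / x) \<in> borel_measurable lborel" by measurable
  have b1: "\<bar>sin (w*x) * sin (c*x) / x\<bar> \<le> max \<bar>w\<bar> 1" for x
  proof -
    have "\<bar>sin (w*x) * sin (c*x) / x\<bar> = \<bar>sin (w*x) / x\<bar> * \<bar>sin (c*x)\<bar>" by (simp add: abs_mult abs_divide)
    also have "\<dots> \<le> \<bar>sin (w*x) / x\<bar> * 1" by (intro mult_left_mono) auto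
    finally show ?thesis using sin_div_bounds(1)[of w x] by simp
  qed
  have b2: "\<bar>sin (w*x) * sin (c*x) / x\<bar> \<le> max \<bar>w\<bar> 1 / \<bar>x\<bar>" if "x \<noteq> 0" for x
  proof -
    have "\<bar>sin (w*x) * sin (c*x) / x\<bar> = \<bar>sin (w*x) / x\<bar> * \<bar>sin (c*x)\<bar>" by (simp add: abs_mult abs_divide)
    also have "\<dots> \<le> \<bar>sin (w*x) / x\<bar> * 1" by (intro mult_left_mono) auto
    finally show ?thesis using sin_div_bounds(2)[of x w] that by simp
  qed
  note sh = shift_lim[OF fm b1 b2, of d]
  have "(LBINT x. indicator {-R<..<R} x * (sin (w*x) * sin (c*x) / x)) = 0" for R
    by (rule odd_integral_zero) (auto simp: indicator_def)
  with sh show ?thesis by simp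
qed

lemma M1:
  fixes w c d :: real
  shows "((\<lambda>R. LBINT x. indicator {d-R<..<d+R} x * (cos (w*x) * sin (c*x) / x)) \<longlongrightarrow> pi * chi c w) at_top"
proof -
  have e: "indicator {d-R<..<d+R} x * (cos (w*x) * sin (c*x) / x) =
      (indicator {d-R<..<d+R} x * (sin ((c+w)*x) / x) + indicator {d-R<..<d+R} x * (sin ((c-w)*x) / x)) / 2" for x R
    by (simp add: sin_add sin_diff algebra_simps add_divide_distrib[symmetric] diff_divide_distrib[symmetric])
  have i: "integrable lborel (\<lambda>x. indicator {d-R<..<d+R} x * (sin (a*x) / x))" for a R
    using int_ind[where B="max \<bar>a\<bar> 1" and f="\<lambda>x. sin (a*x) / x" and a="d-R" and b="d+R"] sin_div_bounds(1)[of a]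
    by (auto intro: borel_measurable_divide)
  have "(LBINT x. indicator {d-R<..<d+R} x * (cos (w*x) * sin (c*x) / x)) =
     ((LBINT x. indicator {d-R<..<d+R} x * (sin ((c+w)*x) / x)) + (LBINT x. indicator {d-R<..<d+R} x * (sin ((c-w)*x) / x))) / 2" for R
    unfolding e using i[where a="c+w" and R=R] i[where a="c-w" and R=R] by simp
  moreover have "((\<lambda>R. ((LBINT x. indicator {d-R<..<d+R} x * (sin ((c+w)*x) / x)) + (LBINT x. indicator {d-R<..<d+R} x * (sin ((c-w)*x) / x))) / 2)
     \<longlongrightarrow> (pi * sgn (c+w) + pi * sgn (c-w)) / 2) at_top"
    by (intro tendsto_intros M0) simp
  ultimately show ?thesis by (simp add: chi_def algebra_simps add_divide_distrib)
qed

lemma sin_cis: "complex_of_real (sin t) = - (\<i> / 2) * (cis t - cis (- t))"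
  by (simp add: complex_eq_iff)

lemma E_lim:
  fixes w c d :: real
  shows "((\<lambda>R. LBINT x. complex_of_real (indicator {d-R<..<d+R} x) * (cis (w*x) * complex_of_real (sin (c*x) / x)))
     \<longlongrightarrow> complex_of_real (pi * chi c w)) at_top"
proof -
  have e: "complex_of_real (indicator {d-R<..<d+R} x) * (cis (w*x) * complex_of_real (sin (c*x) / x)) =
     complex_of_real (indicator {d-R<..<d+R} x * (cos (w*x) * sin (c*x) / x)) +
     \<i> * complex_of_real (indicator {d-R<..<d+R} x * (sin (w*x) * sin (c*x) / x))" for R x
    by (simp add: complex_eq_iff)
  have i1: "integrable lborel (\<lambda>x. indicator {d-R<..<d+R} x * (cos (w*x) * sin (c*x) / x))" for R
  proof -
    have "\<bar>cos (w*x) * sin (c*x) / x\<bar> \<le> max \<bar>c\<bar> 1" for x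
    proof -
      have "\<bar>cos (w*x) * sin (c*x) / x\<bar> = \<bar>cos (w*x)\<bar> * \<bar>sin (c*x) / x\<bar>" by (simp add: abs_mult)
      also have "\<dots> \<le> 1 * \<bar>sin (c*x) / x\<bar>" by (intro mult_right_mono) auto
      finally show ?thesis using sin_div_bounds(1)[of c x] by simp
    qed
    then show ?thesis using int_ind[where B="max \<bar>c\<bar> 1" and f="\<lambda>x. cos (w*x) * sin (c*x) / x" and a="d-R" and b="d+R"]
      by auto
  qed
  have i2: "integrable lborel (\<lambda>x. indicator {d-R<..<d+R} x * (sin (w*x) * sin (c*x) / x))" for R
  proof -
    have "\<bar>sin (w*x) * sin (c*x) / x\<bar> \<le> max \<bar>c\<bar> 1" for x
    proof -
      have "\<bar>sin (w*x) * sin (c*x) / x\<bar> = \<bar>sin (w*x)\<bar> * \<bar>sin (c*x) / x\<bar>" by (simp add: abs_mult)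
      also have "\<dots> \<le> 1 * \<bar>sin (c*x) / x\<bar>" by (intro mult_right_mono) auto
      finally show ?thesis using sin_div_bounds(1)[of c x] by simp
    qed
    then show ?thesis using int_ind[where B="max \<bar>c\<bar> 1" and f="\<lambda>x. sin (w*x) * sin (c*x) / x" and a="d-R" and b="d+R"]
      by auto
  qed
  have eq: "(LBINT x. complex_of_real (indicator {d-R<..<d+R} x) * (cis (w*x) * complex_of_real (sin (c*x) / x))) =
     complex_of_real (LBINT x. indicator {d-R<..<d+R} x * (cos (w*x) * sin (c*x) / x)) +
     \<i> * complex_of_real (LBINT x. indicator {d-R<..<d+R} x * (sin (w*x) * sin (c*x) / x))" for R
  proof -
    have j1: "integrable lborel (\<lambda>x. complex_of_real (indicator {d-R<..<d+R} x * (cos (w*x) * sin (c*x) / x)))"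
      using i1[of R] by (rule integrable_of_real)
    have j2: "integrable lborel (\<lambda>x. \<i> * complex_of_real (indicator {d-R<..<d+R} x * (sin (w*x) * sin (c*x) / x)))"
      using i2[of R] by (intro integrable_mult_right integrable_of_real)
    show ?thesis by (simp only: e Bochner_Integration.integral_add[OF j1 j2] integral_mult_right_zero integral_complex_of_real)
  qed
  have "((\<lambda>R. complex_of_real (LBINT x. indicator {d-R<..<d+R} x * (cos (w*x) * sin (c*x) / x)) +
     \<i> * complex_of_real (LBINT x. indicator {d-R<..<d+R} x * (sin (w*x) * sin (c*x) / x)))
     \<longlongrightarrow> complex_of_real (pi * chi c w) + \<i> * complex_of_real 0) at_top"
    by (intro tendsto_intros M1 M2)
  then show ?thesis unfolding eq by simp
qed

lemma sq_sinc_int: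
  fixes c t :: real
  shows "integrable lborel (\<lambda>x. (sin (c*(t - x)) / (t - x))^2)"
proof -
  have e: "(sin (c*x) / x)^2 = (1 - cos ((2*c)*x)) / x^2 / 2" for x
  proof -
    have "1 - cos ((2*c)*x) = 2 * (sin (c*x))^2" using cos_double_sin[of "c*x"] by (simp add: algebra_simps)
    then show ?thesis by (simp add: power_divide)
  qed
  have "integrable lborel (\<lambda>x. (sin (c*x) / x)^2)"
    unfolding e by (rule integrable_divide) (rule Q_full(1))
  from lborel_integrable_real_affine[OF this, of "-1" t] show ?thesis by simp
qed

definition Etr :: "real \<Rightarrow> real \<Rightarrow> real \<Rightarrow> real \<Rightarrow> complex" where
  "Etr d R w c = (LBINT x. complex_of_real (indicator {d-R<..<d+R} x) * (cis (w*x) * complex_of_real (sin (c*x) / x)))"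

lemma chi_neg: "chi c (-w) = chi c w" unfolding chi_def by simp

lemma meas_cis: "(\<lambda>x. cis (w*x)) \<in> borel_measurable lborel"
proof -
  have "continuous_on UNIV (\<lambda>x. cis (w*x))" by (auto simp: cis_conv_exp intro!: continuous_intros)
  from borel_measurable_continuous_onI[OF this] show ?thesis by simp
qed

lemma int_ind_c:
  fixes f :: "real \<Rightarrow> complex"
  assumes "f \<in> borel_measurable lborel" "\<And>x. norm (f x) \<le> B"
  shows "integrable lborel (\<lambda>x. complex_of_real (indicator {a<..<b} x) * f x)"
  using int_ind[OF assms, of a b] by (simp add: scaleR_conv_of_real)

lemma Etr_int:
  "integrable lborel (\<lambda>x. complex_of_real (indicator {d-R<..<d+R} x) * (cis (w*x) * complex_of_real (sin (c*x) / x)))"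
proof (rule int_ind_c[where B="max \<bar>c\<bar> 1"])
  show "(\<lambda>x. cis (w*x) * complex_of_real (sin (c*x) / x)) \<in> borel_measurable lborel"
    using meas_cis by measurable
  show "norm (cis (w*x) * complex_of_real (sin (c*x) / x)) \<le> max \<bar>c\<bar> 1" for x
    using sin_div_bounds(1)[of c x] by (simp add: norm_mult norm_divide)
qed

lemma ring_aux1:
  fixes P S H W I c1 c2 Q1 Q2 v :: complex
  assumes "P * S = - (\<i>/2) * (c1 * Q1 - c2 * Q2)"
  shows "I * (P * (v * (S * H + W))) = v * (- (\<i>/2) * (c1 * (I * (Q1 * H)) - c2 * (I * (Q2 * H))) + I * (P * W))"
proof -
  have "I * (P * (v * (S * H + W))) = v * (I * ((P * S) * H) + I * (P * W))" by (simp add: algebra_simps)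
  also have "\<dots> = v * (- (\<i>/2) * (c1 * (I * (Q1 * H)) - c2 * (I * (Q2 * H))) + I * (P * W))"
    unfolding assms by (simp add: algebra_simps)
  finally show ?thesis .
qed

lemma ring_aux2:
  fixes P S W I c1 c2 Q1 Q2 :: complex
  assumes "P * S = - (\<i>/2) * (c1 * Q1 - c2 * Q2)"
  shows "I * (P * (S * W)) = - (\<i>/2) * (c1 * (I * (Q1 * W)) - c2 * (I * (Q2 * W)))"
proof -
  have "I * (P * (S * W)) = I * ((P * S) * W)" by (simp add: algebra_simps)
  also have "\<dots> = - (\<i>/2) * (c1 * (I * (Q1 * W)) - c2 * (I * (Q2 * W)))"
    unfolding assms by (simp add: algebra_simps)
  finally show ?thesis .
qed

lemma cis_sin1:
  "cis (p*x) * complex_of_real (sin (K*(b-x))) = - (\<i>/2) * (cis (K*b) * cis ((p-K)*x) - cis (-(K*b)) * cis ((p+K)*x))"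
  by (simp add: sin_cis cis_mult algebra_simps)

lemma cis_sin2:
  "cis (p*(b-y)) * complex_of_real (sin (b0*(b-y))) = - (\<i>/2) * (cis ((p+b0)*b) * cis ((-(p+b0))*y) - cis ((p-b0)*b) * cis ((-(p-b0))*y))"
  by (simp add: sin_cis cis_mult algebra_simps)

lemma norm_cis_of_real: "norm (cis t * complex_of_real r) = \<bar>r\<bar>" by (simp add: norm_mult)

lemma of_real_lin: "complex_of_real (a * (s * h + w)) = complex_of_real a * (complex_of_real s * complex_of_real h + complex_of_real w)"
  by simp

lemma G_split:
  fixes K b0 b x :: real assumes b: "b \<noteq> 0"
  shows "sin (K*(b-x)) / (b-x) * (sin (b0*x) / x) = (1/b) * (sin (K*(b-x)) * (sin (b0*x) / x) + sin (b0*x) * (sin (K*(b-x)) / (b-x)))"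
proof (cases "x = 0 \<or> x = b")
  case True then show ?thesis using b by auto
next
  case False
  then have "b - x \<noteq> 0" "x \<noteq> 0" by auto
  then show ?thesis using b by (simp add: field_simps)
qed

lemma inner_formula:
  fixes K b0 p b :: real assumes K: "K > 0" and b0: "b0 > 0" and b: "b \<noteq> 0"
  shows "(LBINT x. cis (p*x) * complex_of_real (sin (K*(b-x)) / (b-x) * (sin (b0*x) / x))) =
   complex_of_real (1/b) * (- (\<i>/2) * (cis (K*b) * complex_of_real (pi * chi b0 (p-K)) - cis (-(K*b)) * complex_of_real (pi * chi b0 (p+K)))
     + - (\<i>/2) * (cis ((p+b0)*b) * complex_of_real (pi * chi K (p+b0)) - cis ((p-b0)*b) * complex_of_real (pi * chi K (p-b0))))"
proof -
  define G where "G x = sin (K*(b-x)) / (b-x) * (sin (b0*x) / x)" for x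
  define F where "F x = cis (p*x) * complex_of_real (G x)" for x
  define d where "d = b / 2"
  have Fm: "F \<in> borel_measurable lborel" unfolding F_def G_def using meas_cis by measurable
  have Fi: "integrable lborel F"
  proof (rule Bochner_Integration.integrable_bound)
    show "integrable lborel (\<lambda>x. ((sin (K*(b-x)) / (b-x))^2 + (sin (b0*(0-x)) / (0-x))^2) / 2)"
      using sq_sinc_int[of K b] sq_sinc_int[of b0 0] by simp
    show "F \<in> borel_measurable lborel" by (fact Fm)
    show "AE x in lborel. norm (F x) \<le> norm (((sin (K*(b-x)) / (b-x))^2 + (sin (b0*(0-x)) / (0-x))^2) / 2)"
    proof (intro AE_I2)
      fix x
      define u where "u = sin (K*(b-x)) / (b-x)"
      define v where "v = sin (b0*x) / x"
      have vv: "sin (b0*(0-x)) / (0-x) = v" unfolding v_def by simp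
      have n1: "norm (cis t * complex_of_real r) = \<bar>r\<bar>" for t r by (simp add: norm_mult)
      have "norm (F x) = \<bar>G x\<bar>" by (simp only: F_def n1)
      also have "\<dots> = \<bar>u\<bar> * \<bar>v\<bar>" unfolding G_def u_def v_def by (simp only: abs_mult)
      finally have "norm (F x) = \<bar>u\<bar> * \<bar>v\<bar>" .
      also have "\<dots> \<le> (u^2 + v^2) / 2"
        using sum_squares_bound[of "\<bar>u\<bar>" "\<bar>v\<bar>"] by (simp add: power2_eq_square)
      finally show "norm (F x) \<le> norm (((sin (K*(b-x)) / (b-x))^2 + (sin (b0*(0-x)) / (0-x))^2) / 2)"
        unfolding vv u_def[symmetric] by simp
    qed
  qed
  have lim1: "((\<lambda>R. LBINT x. complex_of_real (indicator {d-R<..<d+R} x) * F x) \<longlongrightarrow> integral\<^sup>L lborel F) at_top"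
  proof (rule integral_dominated_convergence_at_top[where w="\<lambda>x. norm (F x)"])
    show "F \<in> borel_measurable lborel" by (fact Fm)
    show "(\<lambda>x. complex_of_real (indicator {d-R<..<d+R} x) * F x) \<in> borel_measurable lborel" for R
      using Fm by measurable
    show "integrable lborel (\<lambda>x. norm (F x))" using Fi by simp
    show "AE x in lborel. ((\<lambda>R. complex_of_real (indicator {d-R<..<d+R} x) * F x) \<longlongrightarrow> F x) at_top"
    proof (intro AE_I2 tendsto_eventually)
      fix x
      show "\<forall>\<^sub>F R in at_top. complex_of_real (indicator {d-R<..<d+R} x) * F x = F x"
        using eventually_gt_at_top[of "\<bar>x - d\<bar>"] by eventually_elim (auto simp: indicator_def abs_if split: if_splits)
    qed
    show "\<forall>\<^sub>F R in at_top. AE x in lborel. norm (complex_of_real (indicator {d-R<..<d+R} x) * F x) \<le> norm (F x)"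
      by (auto simp: indicator_def norm_mult)
  qed
  define A where "A w c x R = complex_of_real (indicator {d-R<..<d+R} x) * (cis (w*x) * complex_of_real (sin (c*x) / x))" for w c x R
  have Teq: "(LBINT x. complex_of_real (indicator {d-R<..<d+R} x) * F x) =
    complex_of_real (1/b) * (- (\<i>/2) * (cis (K*b) * Etr d R (p-K) b0 - cis (-(K*b)) * Etr d R (p+K) b0)
     + - (\<i>/2) * (cis ((p+b0)*b) * Etr d R (-(p+b0)) K - cis ((p-b0)*b) * Etr d R (-(p-b0)) K))" for R
  proof -
    define Bx where "Bx x = complex_of_real (indicator {d-R<..<d+R} x) * (cis (p*x) * complex_of_real (sin (b0*x) * (sin (K*(b-x)) / (b-x))))" for x
    have pw: "complex_of_real (indicator {d-R<..<d+R} x) * F x =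
      complex_of_real (1/b) * (- (\<i>/2) * (cis (K*b) * A (p-K) b0 x R - cis (-(K*b)) * A (p+K) b0 x R) + Bx x)" for x
      unfolding F_def G_def A_def Bx_def G_split[OF b, of K x b0] of_real_lin
      by (rule ring_aux1[OF cis_sin1[of p x K b]]) 
    have iA: "integrable lborel (\<lambda>x. A w c x R)" for w c unfolding A_def by (rule Etr_int)
    have iB: "integrable lborel Bx"
      unfolding Bx_def
    proof (rule int_ind_c[where B="max K 1"])
      show "(\<lambda>x. cis (p*x) * complex_of_real (sin (b0*x) * (sin (K*(b-x)) / (b-x)))) \<in> borel_measurable lborel"
        using meas_cis by measurable
      show "norm (cis (p*x) * complex_of_real (sin (b0*x) * (sin (K*(b-x)) / (b-x)))) \<le> max K 1" for x
      proof -
        have "norm (cis (p*x) * complex_of_real (sin (b0*x) * (sin (K*(b-x)) / (b-x)))) = \<bar>sin (b0*x)\<bar> * \<bar>sin (K*(b-x)) / (b-x)\<bar>"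
          by (simp only: norm_cis_of_real abs_mult)
        also have "\<dots> \<le> 1 * \<bar>sin (K*(b-x)) / (b-x)\<bar>" by (intro mult_right_mono) auto
        also have "\<dots> \<le> max K 1" using sin_div_bounds(1)[of K "b-x"] K by simp
        finally show ?thesis .
      qed
    qed
    have Bint: "integral\<^sup>L lborel Bx = - (\<i>/2) * (cis ((p+b0)*b) * Etr d R (-(p+b0)) K - cis ((p-b0)*b) * Etr d R (-(p-b0)) K)"
    proof -
      have "integral\<^sup>L lborel Bx = (LBINT y. Bx (b + -1 * y))"
        using lborel_integral_real_affine[of "-1" Bx b] by simp
      also have "\<dots> = (LBINT y. - (\<i>/2) * (cis ((p+b0)*b) * A (-(p+b0)) K y R - cis ((p-b0)*b) * A (-(p-b0)) K y R))"
      proof (intro Bochner_Integration.integral_cong refl)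
        fix y
        have ind: "indicator {d-R<..<d+R} (b + -1 * y) = (indicator {d-R<..<d+R} y :: real)"
          unfolding d_def by (auto simp: indicator_def)
        show "Bx (b + -1 * y) = - (\<i>/2) * (cis ((p+b0)*b) * A (-(p+b0)) K y R - cis ((p-b0)*b) * A (-(p-b0)) K y R)"
          unfolding Bx_def A_def ind
          using ring_aux2[OF cis_sin2[of p b y b0], of "complex_of_real (indicator {d-R<..<d+R} y)" "complex_of_real (sin (K*y)/y)"]
          by simp
      qed
      also have "\<dots> = - (\<i>/2) * (cis ((p+b0)*b) * Etr d R (-(p+b0)) K - cis ((p-b0)*b) * Etr d R (-(p-b0)) K)"
        unfolding Etr_def A_def[symmetric] using iA
        by (subst integral_mult_right_zero, subst Bochner_Integration.integral_diff) auto
      finally show ?thesis .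
    qed
    have "(LBINT x. complex_of_real (indicator {d-R<..<d+R} x) * F x) =
      complex_of_real (1/b) * (LBINT x. (- (\<i>/2) * (cis (K*b) * A (p-K) b0 x R - cis (-(K*b)) * A (p+K) b0 x R) + Bx x))"
      unfolding pw by simp
    also have "(LBINT x. (- (\<i>/2) * (cis (K*b) * A (p-K) b0 x R - cis (-(K*b)) * A (p+K) b0 x R) + Bx x))
      = - (\<i>/2) * (cis (K*b) * Etr d R (p-K) b0 - cis (-(K*b)) * Etr d R (p+K) b0) + integral\<^sup>L lborel Bx"
      unfolding Etr_def A_def[symmetric] using iA iB
      by (subst Bochner_Integration.integral_add) (auto intro!: integrable_mult_right)
    finally show ?thesis unfolding Bint .
  qed
  have lim2: "((\<lambda>R. complex_of_real (1/b) * (- (\<i>/2) * (cis (K*b) * Etr d R (p-K) b0 - cis (-(K*b)) * Etr d R (p+K) b0)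
     + - (\<i>/2) * (cis ((p+b0)*b) * Etr d R (-(p+b0)) K - cis ((p-b0)*b) * Etr d R (-(p-b0)) K))) \<longlongrightarrow>
   complex_of_real (1/b) * (- (\<i>/2) * (cis (K*b) * complex_of_real (pi * chi b0 (p-K)) - cis (-(K*b)) * complex_of_real (pi * chi b0 (p+K)))
     + - (\<i>/2) * (cis ((p+b0)*b) * complex_of_real (pi * chi K (-(p+b0))) - cis ((p-b0)*b) * complex_of_real (pi * chi K (-(p-b0)))))) at_top"
    unfolding Etr_def by (intro tendsto_intros E_lim)
  have "integral\<^sup>L lborel F = complex_of_real (1/b) * (- (\<i>/2) * (cis (K*b) * complex_of_real (pi * chi b0 (p-K)) - cis (-(K*b)) * complex_of_real (pi * chi b0 (p+K)))
     + - (\<i>/2) * (cis ((p+b0)*b) * complex_of_real (pi * chi K (-(p+b0))) - cis ((p-b0)*b) * complex_of_real (pi * chi K (-(p-b0)))))"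
    using tendsto_unique[OF _ lim1 lim2[folded Teq]] by simp
  then show ?thesis unfolding F_def G_def chi_neg .
qed

lemma W_lemma:
  fixes a f :: real
  shows "integrable lborel (\<lambda>b. complex_of_real (sin (a*b) / b^2) * (cis (f*b) - 1))"
    "(LBINT b. complex_of_real (sin (a*b) / b^2) * (cis (f*b) - 1)) = \<i> * complex_of_real (pi / 2 * (\<bar>a + f\<bar> - \<bar>a - f\<bar>))"
proof -
  have e: "complex_of_real (sin (a*b) / b^2) * (cis (f*b) - 1) =
     complex_of_real (sin (a*b) * (cos (f*b) - 1) / b^2) + \<i> * complex_of_real (sin (a*b) * sin (f*b) / b^2)" for b
    by (simp add: complex_eq_iff algebra_simps)
  have i1: "integrable lborel (\<lambda>b. sin (a*b) * (cos (f*b) - 1) / b^2)"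
  proof (rule Bochner_Integration.integrable_bound)
    show "integrable lborel (\<lambda>x. (1 - cos (f*x)) / x^2)" by (rule Q_full(1))
    show "(\<lambda>b. sin (a*b) * (cos (f*b) - 1) / b^2) \<in> borel_measurable lborel" by measurable
    show "AE x in lborel. norm (sin (a*x) * (cos (f*x) - 1) / x^2) \<le> norm ((1 - cos (f*x)) / x^2)"
    proof (intro AE_I2)
      fix x
      have "\<bar>sin (a*x) * (cos (f*x) - 1)\<bar> \<le> 1 * \<bar>cos (f*x) - 1\<bar>"
        unfolding abs_mult by (intro mult_right_mono) auto
      then show "norm (sin (a*x) * (cos (f*x) - 1) / x^2) \<le> norm ((1 - cos (f*x)) / x^2)"
        by (simp add: abs_divide divide_right_mono abs_minus_commute)
    qed
  qed
  have z1: "(LBINT b. sin (a*b) * (cos (f*b) - 1) / b^2) = 0"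
    by (rule odd_integral_zero) simp
  note S = S_lemma[of a f]
  have j1: "integrable lborel (\<lambda>b. complex_of_real (sin (a*b) * (cos (f*b) - 1) / b^2))"
    using i1 by (rule integrable_of_real)
  have j2: "integrable lborel (\<lambda>b. \<i> * complex_of_real (sin (a*b) * sin (f*b) / b^2))"
    using S(1) by (intro integrable_mult_right integrable_of_real)
  show "integrable lborel (\<lambda>b. complex_of_real (sin (a*b) / b^2) * (cis (f*b) - 1))"
    unfolding e using j1 j2 by (rule Bochner_Integration.integrable_add)
  show "(LBINT b. complex_of_real (sin (a*b) / b^2) * (cis (f*b) - 1)) = \<i> * complex_of_real (pi / 2 * (\<bar>a + f\<bar> - \<bar>a - f\<bar>))"
    by (simp only: e Bochner_Integration.integral_add[OF j1 j2] integral_mult_right_zero integral_complex_of_real z1 S(2)) simp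
qed

lemma chi_sum:
  fixes K b0 p :: real assumes "K > 0" "b0 > 0"
  shows "chi b0 (p-K) - chi b0 (p+K) + chi K (p+b0) - chi K (p-b0) = 0"
  using assms unfolding chi_def sgn_if by (auto split: if_splits)

lemma ring_aux3:
  fixes c0 c1 c2 c3 c4 s vv q x1 x2 x3 x4 :: complex
  assumes "x1 - x2 + x3 - x4 = 0"
  shows "c0 * s * (vv * (-(\<i>/2)*(c1*(q*x1) - c2*(q*x2)) + -(\<i>/2)*(c3*(q*x3) - c4*(q*x4))))
    = -(\<i>/2)*q*(x1*((s * vv)*(c0*c1-1)) - x2*((s * vv)*(c0*c2-1)) + x3*((s * vv)*(c0*c3 - 1)) - x4*((s * vv)*(c0*c4-1)))"
proof -
  have x4: "x4 = x1 - x2 + x3" using assms by (simp add: algebra_simps)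
  show ?thesis unfolding x4 by (simp add: algebra_simps)
qed

definition Lam :: "real \<Rightarrow> real \<Rightarrow> real \<Rightarrow> real" where
  "Lam K b0 p = (chi b0 (p-K) * (\<bar>b0 + (K-p)\<bar> - \<bar>b0 - (K-p)\<bar>) - chi b0 (p+K) * (\<bar>b0 + (-K-p)\<bar> - \<bar>b0 - (-K-p)\<bar>)
     + chi K (p+b0) * (\<bar>b0 + b0\<bar> - \<bar>b0 - b0\<bar>) - chi K (p-b0) * (\<bar>b0 + (-b0)\<bar> - \<bar>b0 - (-b0)\<bar>)) / 2"

lemma J_formula:
  fixes K b0 p :: real assumes K: "K > 0" and b0: "b0 > 0"
  shows "(LBINT b. LBINT b'. cis (-(p*(b-b'))) * complex_of_real (sin (K*(b-b')) / (b-b') * (sin (b0*b) / b) * (sin (b0*b') / b')))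
     = complex_of_real (pi^2 / 2 * Lam K b0 p)"
proof -
  define x1 where "x1 = complex_of_real (chi b0 (p-K))"
  define x2 where "x2 = complex_of_real (chi b0 (p+K))"
  define x3 where "x3 = complex_of_real (chi K (p+b0))"
  define x4 where "x4 = complex_of_real (chi K (p-b0))"
  define V where "V f b = complex_of_real (sin (b0*b) / b^2) * (cis (f*b) - 1)" for f b
  define \<Phi> where "\<Phi> b = -(\<i>/2) * complex_of_real pi * (x1 * V (K-p) b - x2 * V (-K-p) b + x3 * V b0 b - x4 * V (-b0) b)" for b
  have xs: "x1 - x2 + x3 - x4 = 0" unfolding x1_def x2_def x3_def x4_def
    using chi_sum[OF K b0, of p] by (simp flip: of_real_diff of_real_add)
  have inner: "(LBINT b'. cis (-(p*(b-b'))) * complex_of_real (sin (K*(b-b')) / (b-b') * (sin (b0*b) / b) * (sin (b0*b') / b')))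
     = (cis (-(p*b)) * complex_of_real (sin (b0*b) / b)) * (LBINT b'. cis (p*b') * complex_of_real (sin (K*(b-b')) / (b-b') * (sin (b0*b') / b')))" for b
  proof -
    have c: "cis (-(p*(b-b'))) = cis (-(p*b)) * cis (p*b')" for b' by (simp add: cis_mult algebra_simps)
    have "cis (-(p*(b-b'))) * complex_of_real (sin (K*(b-b')) / (b-b') * (sin (b0*b) / b) * (sin (b0*b') / b'))
       = (cis (-(p*b)) * complex_of_real (sin (b0*b) / b)) * (cis (p*b') * complex_of_real (sin (K*(b-b')) / (b-b') * (sin (b0*b') / b')))" for b'
      unfolding c of_real_mult by (simp only: ac_simps)
    then show ?thesis by (simp only: integral_mult_right_zero)
  qed
  have pw: "(cis (-(p*b)) * complex_of_real (sin (b0*b) / b)) * (LBINT b'. cis (p*b') * complex_of_real (sin (K*(b-b')) / (b-b') * (sin (b0*b') / b'))) = \<Phi> b"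
    if b: "b \<noteq> 0" for b
  proof -
    have sv: "complex_of_real (sin (b0*b) / b) * complex_of_real (1/b) = complex_of_real (sin (b0*b) / b^2)"
      by (simp add: power2_eq_square)
    have m: "cis (-(p*b)) * cis (K*b) = cis ((K-p)*b)" "cis (-(p*b)) * cis (-(K*b)) = cis ((-K-p)*b)"
      "cis (-(p*b)) * cis ((p+b0)*b) = cis (b0*b)" "cis (-(p*b)) * cis ((p-b0)*b) = cis ((-b0)*b)"
      by (simp_all add: cis_mult algebra_simps)
    show ?thesis unfolding inner_formula[OF K b0 b] unfolding of_real_mult
      unfolding x1_def[symmetric] x2_def[symmetric] x3_def[symmetric] x4_def[symmetric]
      unfolding ring_aux3[OF xs] sv m \<Phi>_def V_def ..
  qed
  have all: "(LBINT b'. cis (-(p*(b-b'))) * complex_of_real (sin (K*(b-b')) / (b-b') * (sin (b0*b) / b) * (sin (b0*b') / b'))) = \<Phi> b" for b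
  proof (cases "b = 0")
    case True then show ?thesis by (simp add: \<Phi>_def V_def)
  next
    case False then show ?thesis by (unfold inner, rule pw)
  qed
  have ae: "AE b in lborel. (LBINT b'. cis (-(p*(b-b'))) * complex_of_real (sin (K*(b-b')) / (b-b') * (sin (b0*b) / b) * (sin (b0*b') / b'))) = \<Phi> b"
    using AE_lborel_singleton[of 0] by eventually_elim (unfold inner, erule pw)
  have iV: "integrable lborel (V f)" for f unfolding V_def[abs_def] by (rule W_lemma(1))
  have IV: "integral\<^sup>L lborel (V f) = \<i> * complex_of_real (pi / 2 * (\<bar>b0 + f\<bar> - \<bar>b0 - f\<bar>))" for f
    unfolding V_def[abs_def] by (rule W_lemma(2))
  have "integral\<^sup>L lborel \<Phi> = -(\<i>/2) * complex_of_real pi * (x1 * integral\<^sup>L lborel (V (K-p)) - x2 * integral\<^sup>L lborel (V (-K-p))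
      + x3 * integral\<^sup>L lborel (V b0) - x4 * integral\<^sup>L lborel (V (-b0)))"
    unfolding \<Phi>_def using iV
    by (simp add: Bochner_Integration.integral_add Bochner_Integration.integral_diff integrable_mult_right)
  also have "\<dots> = complex_of_real (pi^2 / 2 * Lam K b0 p)"
    unfolding IV x1_def x2_def x3_def x4_def Lam_def
    by (simp add: complex_eq_iff power2_eq_square field_simps)
  finally have "integral\<^sup>L lborel \<Phi> = complex_of_real (pi^2 / 2 * Lam K b0 p)" .
  then show ?thesis unfolding all .
qed

lemma Lv0: fixes lam b0 t :: real assumes "b0 > 0" "lam > 2*b0"
  shows "t \<le> 0 \<Longrightarrow> max 0 (min (lam/2-b0) (t-lam/2+b0) - max (b0-lam/2) (t-lam/2-b0)) = 0"
  using assms by (simp add: max_def min_def)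

lemma Lv1: fixes lam b0 t :: real assumes "b0 > 0" "lam > 2*b0"
  shows "t \<ge> lam \<Longrightarrow> max 0 (min (lam/2-b0) (t-lam/2+b0) - max (b0-lam/2) (t-lam/2-b0)) = 0"
  using assms by (simp add: max_def min_def)

lemma Lv2: fixes lam b0 t :: real assumes "b0 > 0" "lam > 2*b0"
  shows "lam > 4*b0 \<Longrightarrow> 0 \<le> t \<Longrightarrow> t \<le> 2*b0 \<Longrightarrow> max 0 (min (lam/2-b0) (t-lam/2+b0) - max (b0-lam/2) (t-lam/2-b0)) = t"
  using assms by (simp add: max_def min_def)

lemma Lv3: fixes lam b0 t :: real assumes "b0 > 0" "lam > 2*b0"
  shows "lam > 4*b0 \<Longrightarrow> 2*b0 \<le> t \<Longrightarrow> t \<le> lam - 2*b0 \<Longrightarrow> max 0 (min (lam/2-b0) (t-lam/2+b0) - max (b0-lam/2) (t-lam/2-b0)) = 2*b0"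
  using assms by (simp add: max_def min_def)

lemma Lv4: fixes lam b0 t :: real assumes "b0 > 0" "lam > 2*b0"
  shows "lam > 4*b0 \<Longrightarrow> lam - 2*b0 \<le> t \<Longrightarrow> t \<le> lam \<Longrightarrow> max 0 (min (lam/2-b0) (t-lam/2+b0) - max (b0-lam/2) (t-lam/2-b0)) = lam - t"
  using assms by (simp add: max_def min_def)

lemma Lv5: fixes lam b0 t :: real assumes "b0 > 0" "lam > 2*b0"
  shows "lam < 4*b0 \<Longrightarrow> 0 \<le> t \<Longrightarrow> t \<le> lam - 2*b0 \<Longrightarrow> max 0 (min (lam/2-b0) (t-lam/2+b0) - max (b0-lam/2) (t-lam/2-b0)) = t"
  using assms by (simp add: max_def min_def)

lemma Lv6: fixes lam b0 t :: real assumes "b0 > 0" "lam > 2*b0"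
  shows "lam < 4*b0 \<Longrightarrow> lam - 2*b0 \<le> t \<Longrightarrow> t \<le> 2*b0 \<Longrightarrow> max 0 (min (lam/2-b0) (t-lam/2+b0) - max (b0-lam/2) (t-lam/2-b0)) = lam - 2*b0"
  using assms by (simp add: max_def min_def)

lemma Lv7: fixes lam b0 t :: real assumes "b0 > 0" "lam > 2*b0"
  shows "lam < 4*b0 \<Longrightarrow> 2*b0 \<le> t \<Longrightarrow> t \<le> lam \<Longrightarrow> max 0 (min (lam/2-b0) (t-lam/2+b0) - max (b0-lam/2) (t-lam/2-b0)) = lam - t"
  using assms by (simp add: max_def min_def)

lemma Lv8: fixes lam b0 t :: real assumes "b0 > 0" "lam > 2*b0"
  shows "lam = 4*b0 \<Longrightarrow> 0 \<le> t \<Longrightarrow> t \<le> lam/2 \<Longrightarrow> max 0 (min (lam/2-b0) (t-lam/2+b0) - max (b0-lam/2) (t-lam/2-b0)) = t"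
  using assms by (simp add: max_def min_def)

lemma Lv9: fixes lam b0 t :: real assumes "b0 > 0" "lam > 2*b0"
  shows "lam = 4*b0 \<Longrightarrow> lam/2 \<le> t \<Longrightarrow> t \<le> lam \<Longrightarrow> max 0 (min (lam/2-b0) (t-lam/2+b0) - max (b0-lam/2) (t-lam/2-b0)) = lam - t"
  using assms by (simp add: max_def min_def)

lemma Lvpos: fixes lam b0 t :: real assumes "b0 > 0" "lam > 2*b0"
  shows "0 < t \<Longrightarrow> t < lam \<Longrightarrow> max 0 (min (lam/2-b0) (t-lam/2+b0) - max (b0-lam/2) (t-lam/2-b0)) > 0"
  using assms by (simp add: max_def min_def)

lemma Lam_eq:
  fixes K b0 p :: real assumes "K > 0" "b0 > 0"
  shows "Lam K b0 p = max 0 (min K (p+b0) - max (-K) (p-b0))"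
  using assms unfolding Lam_def chi_def sgn_if by (auto simp: abs_if max_def min_def split: if_splits) (simp_all add: field_simps)

theorem mainTheorem5:
  fixes hbar alpha g0 kappa0 b0 lam :: real
  assumes "hbar > 0" "alpha > 0" "g0 > 0" "kappa0 > 0" "b0 > 0" "lam > 2 * b0"
  defines "Pp \<equiv> mom_density hbar (rho_plus alpha g0 kappa0 b0 lam)"
      and "Pm \<equiv> mom_density hbar (rho_minus alpha g0 kappa0 b0 lam)"
  shows "(\<forall>s. Pm s = Pp (- s))
    \<and> (\<forall>s. s \<notin> {0..lam * hbar} \<longrightarrow> Pp s = 0)
    \<and> (lam > 4 * b0 \<longrightarrow>
         (\<forall>s\<in>{0..2 * b0 * hbar}. Pp s = complex_of_real (s / (2 * b0 * hbar\<^sup>2 * (lam - 2 * b0))))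
       \<and> (\<forall>s\<in>{2 * b0 * hbar..(lam - 2 * b0) * hbar}. Pp s = complex_of_real (1 / ((lam - 2 * b0) * hbar)))
       \<and> (\<forall>s\<in>{(lam - 2 * b0) * hbar..lam * hbar}.
            Pp s = complex_of_real ((lam - s / hbar) / (2 * b0 * hbar * (lam - 2 * b0)))))
    \<and> (2 * b0 < lam \<and> lam < 4 * b0 \<longrightarrow>
         (\<forall>s\<in>{0..(lam - 2 * b0) * hbar}. Pp s = complex_of_real (s / (2 * b0 * hbar\<^sup>2 * (lam - 2 * b0))))
       \<and> (\<forall>s\<in>{(lam - 2 * b0) * hbar..2 * b0 * hbar}. Pp s = complex_of_real (1 / (2 * b0 * hbar)))
       \<and> (\<forall>s\<in>{2 * b0 * hbar..lam * hbar}.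
            Pp s = complex_of_real ((lam - s / hbar) / (2 * b0 * hbar * (lam - 2 * b0)))))
    \<and> (lam = 4 * b0 \<longrightarrow>
         (\<forall>s\<in>{0..lam * hbar / 2}. Pp s = complex_of_real (4 * s / (lam\<^sup>2 * hbar\<^sup>2)))
       \<and> (\<forall>s\<in>{lam * hbar / 2..lam * hbar}. Pp s = complex_of_real (4 * (lam - s / hbar) / (lam\<^sup>2 * hbar))))
    \<and> closure {s. Pp s \<noteq> 0} = {0..lam * hbar}
    \<and> closure {s. Pm s \<noteq> 0} = {- lam * hbar..0}
    \<and> {0..lam * hbar} \<inter> {- lam * hbar..0} = {0}"
proof -
  define K where "K = Kpar alpha g0 kappa0 b0 lam"
  define C where "C = Cpar alpha g0 kappa0 b0 lam"
  have l2: "lam - 2*b0 > 0" using assms by simp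
  have Kv: "K = (lam - 2*b0) / 2" unfolding K_def Kpar_def dtauO_def using assms l2 by (simp add: field_simps)
  have Cv: "C = 2 / (lam - 2*b0)" unfolding C_def Cpar_def dtauO_def using assms l2 by (simp add: field_simps)
  have Kpos: "K > 0" using Kv l2 by simp
  define D where "D = 2*b0*hbar*(lam-2*b0)"
  have Dpos: "D > 0" unfolding D_def using assms l2 by simp
  define L where "L t = max 0 (min (lam/2-b0) (t-lam/2+b0) - max (b0-lam/2) (t-lam/2-b0))" for t
  have mom: "mom_density hbar (rho_kernel sg alpha g0 kappa0 b0 lam) s
     = complex_of_real (L (s/hbar + (1 - sg) * lam/2) / D)" for sg s
  proof -
    define p where "p = s/hbar - sg*lam/2"
    have pw: "exp (- \<i> * complex_of_real (s * (b - b') / hbar)) * rho_kernel sg alpha g0 kappa0 b0 lam b b'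
      = complex_of_real (C / (b0 * pi)) * (cis (-(p*(b-b'))) * complex_of_real (sin (K*(b-b')) / (b-b') * (sin (b0*b) / b) * (sin (b0*b') / b')))" for b b'
    proof -
      have e1: "exp (- \<i> * complex_of_real (s * (b - b') / hbar)) = cis (-(s * (b - b') / hbar))"
        by (simp add: cis_conv_exp)
      have e2: "exp (complex_of_real sg * \<i> * complex_of_real (lam / 2 * (b - b'))) = cis (sg * (lam / 2 * (b - b')))"
        by (simp add: cis_conv_exp algebra_simps)
      have e3: "cis (-(s * (b - b') / hbar)) * cis (sg * (lam / 2 * (b - b'))) = cis (-(p*(b-b')))"
        unfolding cis_mult p_def by (rule arg_cong[where f=cis]) (simp add: field_simps)
      have e4: "C / (b0 * pi) * (sin (K*(b-b')) / (b-b')) * (sin (b0*b) / b) * (sin (b0*b') / b')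
         = C / (b0 * pi) * (sin (K*(b-b')) / (b-b') * (sin (b0*b) / b) * (sin (b0*b') / b'))" by simp
      show ?thesis unfolding rho_kernel_def K_def[symmetric] C_def[symmetric] e4 e1 e2 of_real_mult[of "C / (b0 * pi)"] e3[symmetric]
        by (simp only: ac_simps)
    qed
    have "mom_density hbar (rho_kernel sg alpha g0 kappa0 b0 lam) s =
      complex_of_real (1 / (2 * pi * hbar)) * (complex_of_real (C / (b0 * pi)) *
        (LBINT b. LBINT b'. cis (-(p*(b-b'))) * complex_of_real (sin (K*(b-b')) / (b-b') * (sin (b0*b) / b) * (sin (b0*b') / b'))))"
      unfolding mom_density_def pw by (simp only: integral_mult_right_zero)
    also have "\<dots> = complex_of_real (1 / (2 * pi * hbar) * (C / (b0 * pi) * (pi^2 / 2 * Lam K b0 p)))"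
      unfolding J_formula[OF Kpos assms(5)] by simp
    also have "Lam K b0 p = L (s/hbar + (1 - sg) * lam/2)"
    proof -
      have a: "K = lam/2 - b0" "-K = b0 - lam/2" "p + b0 = (s/hbar + (1 - sg) * lam/2) - lam/2 + b0"
        "p - b0 = (s/hbar + (1 - sg) * lam/2) - lam/2 - b0" unfolding Kv p_def by (simp_all add: field_simps)
      show ?thesis unfolding Lam_eq[OF Kpos assms(5)] unfolding L_def a by simp
    qed
    also have "1 / (2 * pi * hbar) * (C / (b0 * pi) * (pi^2 / 2 * L (s/hbar + (1 - sg) * lam/2))) = L (s/hbar + (1 - sg) * lam/2) / D"
      unfolding Cv D_def using assms l2 by (simp add: field_simps power2_eq_square)
    finally show ?thesis .
  qed
  have Pp: "Pp s = complex_of_real (L (s/hbar) / D)" for s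
    unfolding Pp_def rho_plus_def mom by simp
  have Pm: "Pm s = complex_of_real (L (s/hbar + lam) / D)" for s
    unfolding Pm_def rho_minus_def mom by simp
  have Lsym: "L (- t) = L (t + lam)" for t
  proof -
    have m1: "min (lam/2-b0) (-t-lam/2+b0) = -(max (b0-lam/2) (t+lam-lam/2-b0))"
      unfolding min_def max_def by auto
    have m2: "max (b0-lam/2) (-t-lam/2-b0) = -(min (lam/2-b0) (t+lam-lam/2+b0))"
      unfolding min_def max_def by auto
    show ?thesis unfolding L_def m1 m2 by simp
  qed
  note LV = Lv0[OF assms(5) assms(6), folded L_def] Lv1[OF assms(5) assms(6), folded L_def]
    Lvpos[OF assms(5) assms(6), folded L_def] Lv2[OF assms(5) assms(6), folded L_def]
    Lv3[OF assms(5) assms(6), folded L_def] Lv4[OF assms(5) assms(6), folded L_def]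
    Lv5[OF assms(5) assms(6), folded L_def] Lv6[OF assms(5) assms(6), folded L_def]
    Lv7[OF assms(5) assms(6), folded L_def] Lv8[OF assms(5) assms(6), folded L_def]
    Lv9[OF assms(5) assms(6), folded L_def]
  have hb: "hbar > 0" by (rule assms(1))
  have tr: "s/hbar \<le> c \<longleftrightarrow> s \<le> c * hbar" "c \<le> s/hbar \<longleftrightarrow> c * hbar \<le> s" "s/hbar < c \<longleftrightarrow> s < c * hbar" "c < s/hbar \<longleftrightarrow> c * hbar < s" for s c
    using hb by (simp_all add: pos_divide_le_eq pos_le_divide_eq pos_divide_less_eq pos_less_divide_eq)
  have part1: "\<forall>s. Pm s = Pp (- s)"
    unfolding Pp Pm using Lsym by simp
  have part2: "\<forall>s. s \<notin> {0..lam * hbar} \<longrightarrow> Pp s = 0"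
  proof (intro allI impI)
    fix s assume "s \<notin> {0..lam * hbar}"
    then have "s/hbar \<le> 0 \<or> s/hbar \<ge> lam" using tr[of s 0] tr[of lam s] by auto
    then show "Pp s = 0" unfolding Pp using LV(1,2) by auto
  qed
  have nz: "Pp s \<noteq> 0 \<longleftrightarrow> s \<in> {0<..<lam * hbar}" for s
  proof
    assume "Pp s \<noteq> 0"
    then show "s \<in> {0<..<lam * hbar}" using part2 LV(1,2)[of "s/hbar"] Dpos tr[of s 0] tr[of lam s] unfolding Pp
      by (cases "s/hbar \<le> 0 \<or> s/hbar \<ge> lam") auto
  next
    assume "s \<in> {0<..<lam * hbar}"
    then have "L (s/hbar) > 0" using LV(3)[of "s/hbar"] tr[of s 0] tr[of s lam] by auto
    then show "Pp s \<noteq> 0" unfolding Pp using Dpos by simp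
  qed
  have lam0: "lam > 0" using assms(5,6) by linarith
  have lh: "lam * hbar > 0" using lam0 hb by simp
  have c1: "closure {s. Pp s \<noteq> 0} = {0..lam * hbar}"
  proof -
    have e: "{s. Pp s \<noteq> 0} = {0<..<lam * hbar}" using nz by blast
    show ?thesis unfolding e by (rule closure_greaterThanLessThan[OF lh])
  qed
  have c2: "closure {s. Pm s \<noteq> 0} = {- lam * hbar..0}"
  proof -
    have "{s. Pm s \<noteq> 0} = {- lam * hbar<..<0}"
    proof (intro set_eqI)
      fix s
      have "Pm s \<noteq> 0 \<longleftrightarrow> - s \<in> {0<..<lam * hbar}" using part1 nz[of "-s"] by simp
      also have "\<dots> \<longleftrightarrow> s \<in> {- lam * hbar<..<0}" by auto
      finally show "s \<in> {s. Pm s \<noteq> 0} \<longleftrightarrow> s \<in> {- lam * hbar<..<0}" by simp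
    qed
    moreover have "- lam * hbar < 0" using lh by simp
    ultimately show ?thesis using closure_greaterThanLessThan[of "- lam * hbar" 0] by simp
  qed
  have c3: "{0..lam * hbar} \<inter> {- lam * hbar..0} = {0}" using lh by auto
  have pi_ex: "s \<in> {a * hbar..c * hbar} \<Longrightarrow> s/hbar \<in> {a..c}" for s a c using tr[of s c] tr[of a s] by auto
  have part3: "lam > 4 * b0 \<longrightarrow>
         (\<forall>s\<in>{0..2 * b0 * hbar}. Pp s = complex_of_real (s / (2 * b0 * hbar\<^sup>2 * (lam - 2 * b0))))
       \<and> (\<forall>s\<in>{2 * b0 * hbar..(lam - 2 * b0) * hbar}. Pp s = complex_of_real (1 / ((lam - 2 * b0) * hbar)))
       \<and> (\<forall>s\<in>{(lam - 2 * b0) * hbar..lam * hbar}.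
            Pp s = complex_of_real ((lam - s / hbar) / (2 * b0 * hbar * (lam - 2 * b0))))"
  proof (intro impI conjI ballI)
    assume l: "lam > 4 * b0"
    fix s
    { assume "s \<in> {0..2 * b0 * hbar}"
      then have "s/hbar \<in> {0..2*b0}" using pi_ex[of s 0 "2*b0"] by simp
      then have v: "L (s/hbar) = s/hbar" using LV(4)[OF l, of "s/hbar"] by simp
      then show "Pp s = complex_of_real (s / (2 * b0 * hbar\<^sup>2 * (lam - 2 * b0)))"
        unfolding Pp v using assms l2 by (intro arg_cong[where f=complex_of_real], simp add: D_def power2_eq_square field_simps) }
    { assume "s \<in> {2 * b0 * hbar..(lam - 2 * b0) * hbar}"
      then have "s/hbar \<in> {2*b0..lam - 2*b0}" using pi_ex by simp
      then have v: "L (s/hbar) = 2*b0" using LV(5)[OF l, of "s/hbar"] by simp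
      then show "Pp s = complex_of_real (1 / ((lam - 2 * b0) * hbar))"
        unfolding Pp v using assms by (intro arg_cong[where f=complex_of_real], simp add: D_def field_simps) }
    { assume "s \<in> {(lam - 2 * b0) * hbar..lam * hbar}"
      then have "s/hbar \<in> {lam - 2*b0..lam}" using pi_ex by simp
      then have v: "L (s/hbar) = lam - s/hbar" using LV(6)[OF l, of "s/hbar"] by simp
      then show "Pp s = complex_of_real ((lam - s / hbar) / (2 * b0 * hbar * (lam - 2 * b0)))"
        unfolding Pp v using assms l2 by (intro arg_cong[where f=complex_of_real], simp add: D_def) }
  qed
  have part4: "2 * b0 < lam \<and> lam < 4 * b0 \<longrightarrow>
         (\<forall>s\<in>{0..(lam - 2 * b0) * hbar}. Pp s = complex_of_real (s / (2 * b0 * hbar\<^sup>2 * (lam - 2 * b0))))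
       \<and> (\<forall>s\<in>{(lam - 2 * b0) * hbar..2 * b0 * hbar}. Pp s = complex_of_real (1 / (2 * b0 * hbar)))
       \<and> (\<forall>s\<in>{2 * b0 * hbar..lam * hbar}.
            Pp s = complex_of_real ((lam - s / hbar) / (2 * b0 * hbar * (lam - 2 * b0))))"
  proof (intro impI conjI ballI)
    assume "2 * b0 < lam \<and> lam < 4 * b0"
    then have l: "lam < 4 * b0" by simp
    fix s
    { assume "s \<in> {0..(lam - 2 * b0) * hbar}"
      then have "s/hbar \<in> {0..lam - 2*b0}" using pi_ex[of s 0 "lam - 2*b0"] by simp
      then have v: "L (s/hbar) = s/hbar" using LV(7)[OF l, of "s/hbar"] by simp
      then show "Pp s = complex_of_real (s / (2 * b0 * hbar\<^sup>2 * (lam - 2 * b0)))"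
        unfolding Pp v using assms l2 by (intro arg_cong[where f=complex_of_real], simp add: D_def power2_eq_square field_simps) }
    { assume "s \<in> {(lam - 2 * b0) * hbar..2 * b0 * hbar}"
      then have "s/hbar \<in> {lam - 2*b0..2*b0}" using pi_ex by simp
      then have v: "L (s/hbar) = lam - 2*b0" using LV(8)[OF l, of "s/hbar"] by simp
      then show "Pp s = complex_of_real (1 / (2 * b0 * hbar))"
        unfolding Pp v using assms l2 by (intro arg_cong[where f=complex_of_real], simp add: D_def field_simps) }
    { assume "s \<in> {2 * b0 * hbar..lam * hbar}"
      then have "s/hbar \<in> {2*b0..lam}" using pi_ex by simp
      then have v: "L (s/hbar) = lam - s/hbar" using LV(9)[OF l, of "s/hbar"] by simp
      then show "Pp s = complex_of_real ((lam - s / hbar) / (2 * b0 * hbar * (lam - 2 * b0)))"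
        unfolding Pp v using assms l2 by (intro arg_cong[where f=complex_of_real], simp add: D_def) }
  qed
  have part5: "lam = 4 * b0 \<longrightarrow>
         (\<forall>s\<in>{0..lam * hbar / 2}. Pp s = complex_of_real (4 * s / (lam\<^sup>2 * hbar\<^sup>2)))
       \<and> (\<forall>s\<in>{lam * hbar / 2..lam * hbar}. Pp s = complex_of_real (4 * (lam - s / hbar) / (lam\<^sup>2 * hbar)))"
  proof (intro impI conjI ballI)
    assume l: "lam = 4 * b0"
    fix s
    { assume "s \<in> {0..lam * hbar / 2}"
      then have "s/hbar \<in> {0..lam/2}" using pi_ex[of s 0 "lam/2"] by simp
      then have v: "L (s/hbar) = s/hbar" using LV(10)[OF l, of "s/hbar"] by simp
      then show "Pp s = complex_of_real (4 * s / (lam\<^sup>2 * hbar\<^sup>2))"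
        unfolding Pp v using l assms by (intro arg_cong[where f=complex_of_real], simp add: D_def power2_eq_square field_simps) }
    { assume "s \<in> {lam * hbar / 2..lam * hbar}"
      then have "s/hbar \<in> {lam/2..lam}" using pi_ex[of s "lam/2" lam] by simp
      then have v: "L (s/hbar) = lam - s/hbar" using LV(11)[OF l, of "s/hbar"] by simp
      then show "Pp s = complex_of_real (4 * (lam - s / hbar) / (lam\<^sup>2 * hbar))"
        unfolding Pp v using l assms by (intro arg_cong[where f=complex_of_real], simp add: D_def power2_eq_square field_simps) }
  qed
  show ?thesis using part1 part2 part3 part4 part5 c1 c2 c3 by blast
qed

end
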